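(* Let $k\ge 2$ and let $\mathbf{A}$ be an algebra with a $0$-pointed or $1$-pointed $k$-cube term such that $\mathbf{A}^k$ is finitely generated. Then $d_{\mathbf{A}}(n)\in O(n^{k-1})$.
   Context: An algebra $\mathbf{A}$ has a $p$-pointed $k$-cube term if there is a term $F(x_1,\dots,x_m)$ in the language of $\mathbf{A}$ and a $k\times m$ matrix $M=[y_{i,j}]$ whose entries are variables and constant symbols (nullary operation symbols of the language), exactly $p$ distinct constant symbols occurring, such that every column of $M$ contains an entry different from the variable $x$ and the identities $F(y_{i,1},\dots,y_{i,m})\approx x$, $i=1,\dots,k$, hold in $\mathbf{A}$. $d_{\mathbf{A}}(n)$ is the least size of a generating set of $\mathbf{A}^n$. *)

theory Defs
  imports "HOL-Library.Extended_Nat" "HOL-Library.FuncSet"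
begin

datatype ('f, 'v) uterm = Var 'v | App 'f "('f, 'v) uterm list"

fun wf_term :: "('f \<Rightarrow> nat) \<Rightarrow> ('f, 'v) uterm \<Rightarrow> bool" where
  "wf_term ar (Var v) = True"
| "wf_term ar (App f ts) = (length ts = ar f \<and> (\<forall>t\<in>set ts. wf_term ar t))"

fun term_vars :: "('f, 'v) uterm \<Rightarrow> 'v set" where
  "term_vars (Var v) = {v}"
| "term_vars (App f ts) = (\<Union>t\<in>set ts. term_vars t)"

fun eval_term :: "('f \<Rightarrow> 'a list \<Rightarrow> 'a) \<Rightarrow> ('v \<Rightarrow> 'a) \<Rightarrow> ('f, 'v) uterm \<Rightarrow> 'a" where
  "eval_term I \<rho> (Var v) = \<rho> v"
| "eval_term I \<rho> (App f ts) = I f (map (eval_term I \<rho>) ts)"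

definition is_algebra :: "('f \<Rightarrow> nat) \<Rightarrow> 'a set \<Rightarrow> ('f \<Rightarrow> 'a list \<Rightarrow> 'a) \<Rightarrow> bool" where
  "is_algebra ar A I \<longleftrightarrow> A \<noteq> {} \<and>
     (\<forall>f xs. length xs = ar f \<and> set xs \<subseteq> A \<longrightarrow> I f xs \<in> A)"

definition power_carrier :: "'a set \<Rightarrow> nat \<Rightarrow> (nat \<Rightarrow> 'a) set" where
  "power_carrier A n = ({0..<n} \<rightarrow>\<^sub>E A)"

inductive_set power_Sg :: "('f \<Rightarrow> nat) \<Rightarrow> ('f \<Rightarrow> 'a list \<Rightarrow> 'a) \<Rightarrow> nat
    \<Rightarrow> (nat \<Rightarrow> 'a) set \<Rightarrow> (nat \<Rightarrow> 'a) set"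
  for ar I n G where
  gen: "g \<in> G \<Longrightarrow> g \<in> power_Sg ar I n G"
| op: "length xs = ar f \<Longrightarrow> (\<forall>x\<in>set xs. x \<in> power_Sg ar I n G) \<Longrightarrow>
       (\<lambda>i. if i < n then I f (map (\<lambda>x. x i) xs) else undefined) \<in> power_Sg ar I n G"

definition generates_power :: "('f \<Rightarrow> nat) \<Rightarrow> 'a set \<Rightarrow> ('f \<Rightarrow> 'a list \<Rightarrow> 'a) \<Rightarrow> nat
    \<Rightarrow> (nat \<Rightarrow> 'a) set \<Rightarrow> bool" where
  "generates_power ar A I n G \<longleftrightarrow>
     G \<subseteq> power_carrier A n \<and> power_Sg ar I n G = power_carrier A n"

text \<open>d_A(n): least size of a generating set of A^n (infinity if none is finite).\<close>
definition d_A :: "('f \<Rightarrow> nat) \<Rightarrow> 'a set \<Rightarrow> ('f \<Rightarrow> 'a list \<Rightarrow> 'a) \<Rightarrow> nat \<Rightarrow> enat" where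
  "d_A ar A I n = (INF G \<in> {G. finite G \<and> generates_power ar A I n G}. enat (card G))"

text \<open>A p-pointed k-cube term: term F in variables 0..<m (x_1..x_m), and a k x m matrix M
  whose entries are variables or constant symbols (nullary operation symbols); the variable x
  of the identities is Var 0 of the entry-variable type; exactly p distinct constant symbols
  occur; every column contains an entry different from x; and the identities
  F(M i 0, ..., M i (m-1)) = x hold in the algebra for all i < k.\<close>
definition is_entry :: "('f \<Rightarrow> nat) \<Rightarrow> ('f, nat) uterm \<Rightarrow> bool" where
  "is_entry ar e \<longleftrightarrow> (\<exists>v. e = Var v) \<or> (\<exists>c. ar c = 0 \<and> e = App c [])"

definition has_pointed_cube_term ::
    "('f \<Rightarrow> nat) \<Rightarrow> 'a set \<Rightarrow> ('f \<Rightarrow> 'a list \<Rightarrow> 'a) \<Rightarrow> nat \<Rightarrow> nat \<Rightarrow> bool" where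
  "has_pointed_cube_term ar A I p k \<longleftrightarrow>
    (\<exists>(F :: ('f, nat) uterm) m (M :: nat \<Rightarrow> nat \<Rightarrow> ('f, nat) uterm).
       wf_term ar F \<and> term_vars F \<subseteq> {0..<m} \<and>
       (\<forall>i<k. \<forall>j<m. is_entry ar (M i j)) \<and>
       card {c. \<exists>i<k. \<exists>j<m. M i j = App c []} = p \<and>
       (\<forall>j<m. \<exists>i<k. M i j \<noteq> Var 0) \<and>
       (\<forall>i<k. \<forall>\<rho>. (\<forall>v. \<rho> v \<in> A) \<longrightarrow>
          eval_term I (\<lambda>j. eval_term I \<rho> (M i j)) F = \<rho> 0))"

end

theory Submission
  imports Defs
begin

definition phi :: "(nat \<Rightarrow> nat) \<Rightarrow> nat \<Rightarrow> (nat \<Rightarrow> 'a) \<Rightarrow> (nat \<Rightarrow> 'a)" where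
  "phi \<tau> n x = (\<lambda>l. if l < n then x (\<tau> l) else undefined)"

lemma Sg_mono: assumes "G \<subseteq> H" shows "power_Sg ar I n G \<subseteq> power_Sg ar I n H"
proof
  fix x assume "x \<in> power_Sg ar I n G"
  then show "x \<in> power_Sg ar I n H"
    by induction (use assms in \<open>auto intro: power_Sg.intros\<close>)
qed

lemma Sg_carrier:
  assumes alg: "is_algebra ar A I" and G: "G \<subseteq> power_carrier A n"
  shows "power_Sg ar I n G \<subseteq> power_carrier A n"
proof
  fix x assume "x \<in> power_Sg ar I n G"
  then show "x \<in> power_carrier A n"
  proof induction
    case (gen g) then show ?case using G by auto
  next
    case (op xs f)
    have "I f (map (\<lambda>x. x i) xs) \<in> A" if "i < n" for i
    proof -
      have "set (map (\<lambda>x. x i) xs) \<subseteq> A"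
        using op that unfolding power_carrier_def by (auto simp: PiE_def Pi_def)
      then show ?thesis using alg op(1) unfolding is_algebra_def by auto
    qed
    then show ?case unfolding power_carrier_def by (auto simp: PiE_def extensional_def)
  qed
qed

lemma Sg_hom:
  assumes "\<forall>l<n. \<tau> l < k" and "x \<in> power_Sg ar I k G"
  shows "phi \<tau> n x \<in> power_Sg ar I n (phi \<tau> n ` G)"
  using assms(2)
proof induction
  case (gen g) then show ?case by (auto intro: power_Sg.gen)
next
  case (op xs f)
  have "(\<lambda>i. if i < n then I f (map (\<lambda>x. x i) (map (phi \<tau> n) xs)) else undefined) \<in> power_Sg ar I n (phi \<tau> n ` G)"
    by (rule power_Sg.op) (use op in auto)
  moreover have "(\<lambda>i. if i < n then I f (map (\<lambda>x. x i) (map (phi \<tau> n) xs)) else undefined) = phi \<tau> n (\<lambda>i. if i < k then I f (map (\<lambda>x. x i) xs) else undefined)"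
    using assms(1) by (auto simp: phi_def fun_eq_iff o_def)
  ultimately show ?case by simp
qed

lemma Sg_term:
  assumes "wf_term ar F" "\<forall>j\<in>term_vars F. b j \<in> power_Sg ar I n G \<and> (\<forall>l\<ge>n. b j l = undefined)"
  shows "(\<lambda>l. if l < n then eval_term I (\<lambda>j. b j l) F else undefined) \<in> power_Sg ar I n G"
  using assms
proof (induction F)
  case (Var v)
  then have "(\<lambda>l. if l < n then eval_term I (\<lambda>j. b j l) (Var v) else undefined) = b v"
    by (auto simp: fun_eq_iff)
  then show ?case using Var by simp
next
  case (App f ts)
  let ?g = "\<lambda>t. (\<lambda>l. if l < n then eval_term I (\<lambda>j. b j l) t else undefined)"
  have "(\<lambda>i. if i < n then I f (map (\<lambda>x. x i) (map ?g ts)) else undefined) \<in> power_Sg ar I n G"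
    apply (rule power_Sg.op) using App by auto
  moreover have "(\<lambda>i. if i < n then I f (map (\<lambda>x. x i) (map ?g ts)) else undefined) = ?g (App f ts)"
    by (auto simp: fun_eq_iff o_def)
  ultimately show ?case by simp
qed

theorem corollary5p6:
  fixes ar :: "'f \<Rightarrow> nat" and A :: "'a set" and I :: "'f \<Rightarrow> 'a list \<Rightarrow> 'a" and k p :: nat
  assumes "k \<ge> 2"
    and "is_algebra ar A I"
    and "p \<le> 1"
    and "has_pointed_cube_term ar A I p k"
    and "\<exists>G. finite G \<and> generates_power ar A I k G"
  shows "\<exists>C::nat. \<forall>\<^sub>F n in sequentially. d_A ar A I n \<le> enat (C * n ^ (k - 1))"
proof -
  obtain G where Gfin: "finite G" and Ggen: "generates_power ar A I k G" using assms(5) by blast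
  from assms(4) obtain F :: "('f, nat) uterm" and m :: nat and M :: "nat \<Rightarrow> nat \<Rightarrow> ('f, nat) uterm" where
    wfF: "wf_term ar F" and varsF: "term_vars F \<subseteq> {0..<m}" and
    ent: "\<forall>i<k. \<forall>j<m. is_entry ar (M i j)" and
    cardc: "card {c. \<exists>i<k. \<exists>j<m. M i j = App c []} = p" and
    col: "\<forall>j<m. \<exists>i<k. M i j \<noteq> Var 0" and
    idn: "\<forall>i<k. \<forall>\<rho>. (\<forall>v. \<rho> v \<in> A) \<longrightarrow> eval_term I (\<lambda>j. eval_term I \<rho> (M i j)) F = \<rho> 0"
    unfolding has_pointed_cube_term_def by blast
  let ?C = "{c. \<exists>i<k. \<exists>j<m. M i j = App c []}"
  have Cfin: "finite ?C"
  proof -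
    have "?C \<subseteq> (\<lambda>(i,j). case M i j of App c _ \<Rightarrow> c | Var _ \<Rightarrow> undefined) ` ({0..<k} \<times> {0..<m})"
      by force
    then show ?thesis by (rule finite_subset) auto
  qed
  obtain e where eA: "e \<in> A" and econst: "\<forall>c\<in>?C. I c [] = e"
  proof (cases "p = 0")
    case True
    then have "?C = {}" using cardc Cfin by simp
    moreover obtain e where "e \<in> A" using assms(2) unfolding is_algebra_def by blast
    ultimately show ?thesis using that by blast
  next
    case False
    then have "card ?C = 1" using cardc assms(3) by simp
    then obtain c0 where c0: "?C = {c0}" by (rule card_1_singletonE)
    then obtain i j where "i<k" "j<m" "M i j = App c0 []" by blast
    with ent have "ar c0 = 0" unfolding is_entry_def by fastforce
    then have "I c0 [] \<in> A" using assms(2) unfolding is_algebra_def by auto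
    then show ?thesis using c0 by (intro that[of "I c0 []"]) auto
  qed
  have entry: "\<forall>i<k. \<forall>j<m. (\<exists>v. M i j = Var v) \<or> (\<exists>c. M i j = App c [] \<and> ar c = 0 \<and> I c [] = e)"
    using ent econst unfolding is_entry_def by blast
  have k1: "k \<ge> 1" using assms(1) by simp
  define tau :: "(nat \<Rightarrow> nat) \<Rightarrow> nat \<Rightarrow> nat" where
    "tau = (\<lambda>\<sigma> l. if \<exists>i<k-1. \<sigma> i = l then (LEAST i. i<k-1 \<and> \<sigma> i = l) else k-1)"
  have tau_lt: "tau \<sigma> l < k" for \<sigma> l
  proof (cases "\<exists>i<k-1. \<sigma> i = l")
    case True
    then have "(LEAST i. i<k-1 \<and> \<sigma> i = l) < k-1" by (metis (mono_tags, lifting) LeastI)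
    then show ?thesis using True unfolding tau_def by simp
  next
    case False then show ?thesis using k1 unfolding tau_def by auto
  qed
  define Gs where "Gs = (\<lambda>n. \<Union>\<sigma>\<in>({0..<k-1} \<rightarrow>\<^sub>E {0..<n}). phi (tau \<sigma>) n ` G)"
  have Gk: "G \<subseteq> power_carrier A k" "power_Sg ar I k G = power_carrier A k"
    using Ggen unfolding generates_power_def by auto
  have gen: "generates_power ar A I n (Gs n)" if n1: "n \<ge> 1" for n
  proof -
    let ?S = "power_Sg ar I n (Gs n)"
    have sub: "Gs n \<subseteq> power_carrier A n"
    proof
      fix x assume "x \<in> Gs n"
      then obtain \<sigma> g where g: "g \<in> G" and x: "x = phi (tau \<sigma>) n g" unfolding Gs_def by blast
      have gP: "g \<in> {0..<k} \<rightarrow>\<^sub>E A" using g Gk(1) unfolding power_carrier_def by blast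
      have "g (tau \<sigma> l) \<in> A" for l using PiE_mem[OF gP, of "tau \<sigma> l"] tau_lt[of \<sigma> l] by auto
      then show "x \<in> power_carrier A n" unfolding x phi_def power_carrier_def by auto
    qed
    define supp where "supp = (\<lambda>a::nat\<Rightarrow>'a. {l\<in>{0..<n}. a l \<noteq> e})"
    have finsupp: "finite (supp a)" for a unfolding supp_def by auto
    have main: "\<forall>a\<in>power_carrier A n. card (supp a) = s \<longrightarrow> a \<in> ?S" for s
    proof (induction s rule: less_induct)
      case (less s)
      show ?case
      proof (intro ballI impI)
        fix a assume aC: "a \<in> power_carrier A n" and cs: "card (supp a) = s"
        have aA: "\<And>l. l < n \<Longrightarrow> a l \<in> A" and aU: "\<And>l. l \<ge> n \<Longrightarrow> a l = undefined"
          using aC unfolding power_carrier_def by (auto simp: PiE_def extensional_def Pi_def)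
        define xs where "xs = sorted_list_of_set (supp a)"
        have xs: "set xs = supp a" "distinct xs" "length xs = s"
          unfolding xs_def using finsupp cs by auto
        show "a \<in> ?S"
        proof (cases "s < k")
          case True
          define \<sigma> where "\<sigma> = (\<lambda>i. if i<k-1 then (if i < length xs then xs!i else 0) else undefined)"
          have sig: "\<sigma> \<in> {0..<k-1} \<rightarrow>\<^sub>E {0..<n}"
          proof -
            have hx: "xs ! i < n" if "i < length xs" for i
            proof -
              have "xs ! i \<in> supp a" using nth_mem[OF that] xs(1) by simp
              then show ?thesis by (simp add: supp_def)
            qed
            show ?thesis
            proof (rule PiE_I)
              fix i assume "i \<in> {0..<k-1}" then show "\<sigma> i \<in> {0..<n}" using hx n1 by (simp add: \<sigma>_def)
            next
              fix i assume "i \<notin> {0..<k-1}" then show "\<sigma> i = undefined" by (simp add: \<sigma>_def)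
            qed
          qed
          have cov: "\<exists>i<k-1. \<sigma> i = l" if "l \<in> supp a" for l
          proof -
            have "l \<in> set xs" using that xs(1) by simp
            then obtain i where i: "i < length xs" "xs ! i = l" by (auto simp: in_set_conv_nth)
            have ik: "i < k-1" using True xs(3) i(1) by simp
            then have "\<sigma> i = l" unfolding \<sigma>_def using i by simp
            then show ?thesis using ik by blast
          qed
          define g where "g = (\<lambda>i. if i<k-1 then a (\<sigma> i) else if i = k-1 then e else undefined)"
          have "g \<in> power_carrier A k"
            unfolding power_carrier_def
          proof (rule PiE_I)
            fix i assume i: "i \<in> {0..<k}"
            show "g i \<in> A"
            proof (cases "i < k-1")
              case True
              then have "\<sigma> i \<in> {0..<n}" using PiE_mem[OF sig, of i] by simp
              then show ?thesis using aA True unfolding g_def by simp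
            next
              case False
              then have "i = k-1" using i by auto
              then show ?thesis using eA unfolding g_def by simp
            qed
          next
            fix i assume "i \<notin> {0..<k}" then show "g i = undefined" using k1 unfolding g_def by auto
          qed
          then have "g \<in> power_Sg ar I k G" unfolding Gk(2) .
          moreover have "\<forall>l<n. tau \<sigma> l < k" using tau_lt by blast
          ultimately have h1: "phi (tau \<sigma>) n g \<in> power_Sg ar I n (phi (tau \<sigma>) n ` G)"
            by (intro Sg_hom)
          have "phi (tau \<sigma>) n ` G \<subseteq> Gs n" unfolding Gs_def by (rule UN_upper[OF sig])
          then have "power_Sg ar I n (phi (tau \<sigma>) n ` G) \<subseteq> ?S" by (rule Sg_mono)
          then have inS: "phi (tau \<sigma>) n g \<in> ?S" using h1 by (rule subsetD)
          have "phi (tau \<sigma>) n g = a"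
          proof
            fix l show "phi (tau \<sigma>) n g l = a l"
            proof (cases "l < n")
              case False then show ?thesis using aU unfolding phi_def by simp
            next
              case ln: True
              show ?thesis
              proof (cases "\<exists>i<k-1. \<sigma> i = l")
                case True
                let ?i = "LEAST i. i<k-1 \<and> \<sigma> i = l"
                have "?i < k-1 \<and> \<sigma> ?i = l" using True by (metis (mono_tags, lifting) LeastI)
                then show ?thesis using True ln unfolding phi_def tau_def g_def by simp
              next
                case False
                then have "l \<notin> supp a" using cov by blast
                then have "a l = e" using ln unfolding supp_def by auto
                moreover have "tau \<sigma> l = k-1" using False unfolding tau_def by auto
                ultimately show ?thesis using ln unfolding phi_def g_def by simp
              qed
            qed
          qed
          then show ?thesis using inS by simp
        next
          case False
          then have lenk: "k \<le> length xs" using xs(3) by simp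
          define \<pi> where "\<pi> = (\<lambda>l. if \<exists>i<k. xs!i = l then (LEAST i. i<k \<and> xs!i = l) else 0)"
          have pi_lt: "\<pi> l < k" for l
          proof (cases "\<exists>i<k. xs!i = l")
            case True
            then have "(LEAST i. i<k \<and> xs!i = l) < k" by (metis (mono_tags, lifting) LeastI)
            then show ?thesis using True unfolding \<pi>_def by simp
          next
            case False then show ?thesis using k1 unfolding \<pi>_def by auto
          qed
          have pi_xs: "\<pi> (xs!i0) = i0" if "i0 < k" for i0
          proof -
            have "(LEAST i. i<k \<and> xs!i = xs!i0) = i0"
            proof (rule Least_equality)
              show "i0 < k \<and> xs ! i0 = xs ! i0" using that by simp
            next
              fix y assume "y < k \<and> xs ! y = xs ! i0"
              then have "y = i0" using xs(2) lenk that nth_eq_iff_index_eq by fastforce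
              then show "i0 \<le> y" by simp
            qed
            then show ?thesis using that unfolding \<pi>_def by auto
          qed
          define \<rho> :: "nat \<Rightarrow> nat \<Rightarrow> 'a" where "\<rho> = (\<lambda>l v. if v = 0 then a l else e)"
          have \<rho>A: "\<rho> l v \<in> A" if "l < n" for l v using aA[OF that] eA unfolding \<rho>_def by auto
          define b where "b = (\<lambda>j l. if l < n then eval_term I (\<rho> l) (M (\<pi> l) j) else undefined)"
          have bval: "b j l \<in> A" if "j < m" "l < n" for j l
          proof -
            from entry pi_lt that(1) have "(\<exists>v. M (\<pi> l) j = Var v) \<or> (\<exists>c. M (\<pi> l) j = App c [] \<and> ar c = 0 \<and> I c [] = e)"
              by blast
            then show ?thesis using \<rho>A[OF that(2)] eA that(2) unfolding b_def by auto
          qed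
          have bC: "b j \<in> power_carrier A n" if "j < m" for j
            using bval[OF that] unfolding power_carrier_def by (auto simp: b_def PiE_def Pi_def extensional_def)
          have bsupp: "supp (b j) \<subset> supp a" if jm: "j < m" for j
          proof -
            obtain i0 where i0: "i0 < k" "M i0 j \<noteq> Var 0" using col jm by blast
            have s1: "supp (b j) \<subseteq> supp a"
            proof
              fix l assume l: "l \<in> supp (b j)"
              then have ln: "l < n" unfolding supp_def by auto
              show "l \<in> supp a"
              proof (rule ccontr)
                assume "l \<notin> supp a"
                then have "a l = e" using ln unfolding supp_def by auto
                then have r: "\<rho> l = (\<lambda>v. e)" unfolding \<rho>_def by auto
                from entry pi_lt jm have "(\<exists>v. M (\<pi> l) j = Var v) \<or> (\<exists>c. M (\<pi> l) j = App c [] \<and> ar c = 0 \<and> I c [] = e)"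
                  by blast
                then have "b j l = e" using r ln unfolding b_def by auto
                then show False using l unfolding supp_def by auto
              qed
            qed
            have x0: "xs ! i0 \<in> supp a" using xs(1) lenk i0(1) by (metis nth_mem order_less_le_trans)
            then have x0n: "xs ! i0 < n" unfolding supp_def by auto
            from entry i0(1) jm have "(\<exists>v. M i0 j = Var v) \<or> (\<exists>c. M i0 j = App c [] \<and> ar c = 0 \<and> I c [] = e)"
              by blast
            then have "b j (xs ! i0) = e" using i0 x0n pi_xs[OF i0(1)] unfolding b_def \<rho>_def by auto
            then have "xs ! i0 \<notin> supp (b j)" unfolding supp_def by auto
            then show ?thesis using s1 x0 by blast
          qed
          have bS: "b j \<in> ?S \<and> (\<forall>l\<ge>n. b j l = undefined)" if "j \<in> term_vars F" for j
          proof -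
            have jm: "j < m" using that varsF by auto
            have "card (supp (b j)) < s" using psubset_card_mono[OF finsupp bsupp[OF jm]] cs by simp
            then have "b j \<in> ?S" using less bC[OF jm] by blast
            then show ?thesis unfolding b_def by auto
          qed
          have "(\<lambda>l. if l < n then eval_term I (\<lambda>j. b j l) F else undefined) \<in> ?S"
            using Sg_term[OF wfF] bS by blast
          moreover have "(\<lambda>l. if l < n then eval_term I (\<lambda>j. b j l) F else undefined) = a"
          proof
            fix l show "(if l < n then eval_term I (\<lambda>j. b j l) F else undefined) = a l"
            proof (cases "l < n")
              case False then show ?thesis using aU by simp
            next
              case True
              then have "(\<lambda>j. b j l) = (\<lambda>j. eval_term I (\<rho> l) (M (\<pi> l) j))" unfolding b_def by simp
              moreover have "eval_term I (\<lambda>j. eval_term I (\<rho> l) (M (\<pi> l) j)) F = \<rho> l 0"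
                using idn pi_lt \<rho>A[OF True] by blast
              ultimately show ?thesis using True unfolding \<rho>_def by simp
            qed
          qed
          ultimately show ?thesis by simp
        qed
      qed
    qed
    have "power_carrier A n \<subseteq> ?S" using main by blast
    moreover have "?S \<subseteq> power_carrier A n" using Sg_carrier[OF assms(2) sub] .
    ultimately show ?thesis unfolding generates_power_def using sub by blast
  qed
  have bound: "d_A ar A I n \<le> enat (card G * n ^ (k - 1))" if n1: "n \<ge> 1" for n
  proof -
    have fin: "finite ({0..<k-1} \<rightarrow>\<^sub>E {0..<n})" by (rule finite_PiE) auto
    have "card (Gs n) \<le> (\<Sum>\<sigma>\<in>({0..<k-1} \<rightarrow>\<^sub>E {0..<n}). card (phi (tau \<sigma>) n ` G))"
      unfolding Gs_def by (rule card_UN_le[OF fin])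
    also have "\<dots> \<le> (\<Sum>\<sigma>\<in>({0..<k-1} \<rightarrow>\<^sub>E {0..<n}). card G)"
      by (rule sum_mono) (rule card_image_le[OF Gfin])
    also have "\<dots> = card G * n ^ (k - 1)" by (simp add: card_PiE)
    finally have c: "card (Gs n) \<le> card G * n ^ (k - 1)" .
    have "finite (Gs n)" unfolding Gs_def using fin Gfin by auto
    then have "d_A ar A I n \<le> enat (card (Gs n))"
      unfolding d_A_def using gen[OF n1] by (intro INF_lower) auto
    also have "\<dots> \<le> enat (card G * n ^ (k - 1))" using c by simp
    finally show ?thesis .
  qed
  show ?thesis
    unfolding eventually_sequentially
    by (rule exI[of _ "card G"], rule exI[of _ 1], intro allI impI, rule bound) simp
qed

end
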